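(* There exist a separable metrizable $g$-reversible topological group $G$ and a closed subgroup $H$ of $G$ such that $H$ is countable and precompact and $H$ (with the subspace topology) is not $g$-reversible.
   Context: All topological groups are assumed Hausdorff. A topological group $G$ is called $g$-reversible if every continuous automorphism of $G$ (i.e. every continuous group isomorphism of $G$ onto itself) is an open map. A topological group is precompact if for every neighbourhood $U$ of the identity there is a finite $F$ with $FU=G$. *)

theory Defs
  imports "HOL-Analysis.Analysis" "HOL-Algebra.Coset"
begin

definition topological_group :: "('a, 'b) monoid_scheme \<Rightarrow> 'a topology \<Rightarrow> bool" where
  "topological_group G T \<longleftrightarrow>
     group G \<and> topspace T = carrier G \<and> Hausdorff_space T \<and>
     continuous_map (prod_topology T T) T (\<lambda>(x, y). x \<otimes>\<^bsub>G\<^esub> y) \<and>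
     continuous_map T T (\<lambda>x. inv\<^bsub>G\<^esub> x)"

definition g_reversible :: "('a, 'b) monoid_scheme \<Rightarrow> 'a topology \<Rightarrow> bool" where
  "g_reversible G T \<longleftrightarrow>
     (\<forall>f. f \<in> iso G G \<and> continuous_map T T f \<longrightarrow> open_map T T f)"

definition precompact_group :: "('a, 'b) monoid_scheme \<Rightarrow> 'a topology \<Rightarrow> bool" where
  "precompact_group G T \<longleftrightarrow>
     (\<forall>U. U \<subseteq> carrier G \<and> (\<exists>V. openin T V \<and> \<one>\<^bsub>G\<^esub> \<in> V \<and> V \<subseteq> U) \<longrightarrow>
        (\<exists>F. finite F \<and> F \<subseteq> carrier G \<and> F <#>\<^bsub>G\<^esub> U = carrier G))"

end

theory Submission
  imports Defs
begin

definition CC :: "(nat \<Rightarrow> int) set" where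
  "CC = {g. (\<forall>j. 0 \<le> g j \<and> g j < 2^Suc j) \<and> finite {j. g j \<noteq> 0}}"
definition addc :: "(nat \<Rightarrow> int) \<Rightarrow> (nat \<Rightarrow> int) \<Rightarrow> (nat \<Rightarrow> int)" where
  "addc g h = (\<lambda>j. (g j + h j) mod 2^Suc j)"
definition negc :: "(nat \<Rightarrow> int) \<Rightarrow> (nat \<Rightarrow> int)" where
  "negc g = (\<lambda>j. (- g j) mod 2^Suc j)"
definition smulc :: "nat \<Rightarrow> (nat \<Rightarrow> int) \<Rightarrow> (nat \<Rightarrow> int)" where
  "smulc k g = (\<lambda>j. (int k * g j) mod 2^Suc j)"
definition zeroc :: "nat \<Rightarrow> int" where "zeroc = (\<lambda>j. 0)"

lemma CC_D: "g \<in> CC \<Longrightarrow> 0 \<le> g j \<and> g j < 2^Suc j"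
  by (auto simp: CC_def)
lemma CC_fin: "g \<in> CC \<Longrightarrow> finite {j. g j \<noteq> 0}"
  by (auto simp: CC_def)
lemma CC_I: "(\<And>j. 0 \<le> g j \<and> g j < 2^Suc j) \<Longrightarrow> finite {j. g j \<noteq> 0} \<Longrightarrow> g \<in> CC"
  by (auto simp: CC_def)

lemma CC_mod: "g \<in> CC \<Longrightarrow> g j mod 2^Suc j = g j"
  using CC_D[of g j] by simp

lemma zeroc_CC: "zeroc \<in> CC" by (auto simp: CC_def zeroc_def)

lemma addc_CC: assumes "g \<in> CC" "h \<in> CC" shows "addc g h \<in> CC"
proof (rule CC_I)
  show "0 \<le> addc g h j \<and> addc g h j < 2^Suc j" for j by (simp add: addc_def)
  have "{j. addc g h j \<noteq> 0} \<subseteq> {j. g j \<noteq> 0} \<union> {j. h j \<noteq> 0}" by (auto simp: addc_def)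
  then show "finite {j. addc g h j \<noteq> 0}" using CC_fin[OF assms(1)] CC_fin[OF assms(2)]
    by (meson finite_Un finite_subset)
qed

lemma negc_CC: assumes "g \<in> CC" shows "negc g \<in> CC"
proof (rule CC_I)
  show "0 \<le> negc g j \<and> negc g j < 2^Suc j" for j by (simp add: negc_def)
  have "{j. negc g j \<noteq> 0} \<subseteq> {j. g j \<noteq> 0}" by (auto simp: negc_def)
  then show "finite {j. negc g j \<noteq> 0}" using CC_fin[OF assms(1)]
    by (meson finite_subset)
qed

lemma smulc_CC: assumes "g \<in> CC" shows "smulc k g \<in> CC"
proof (rule CC_I)
  show "0 \<le> smulc k g j \<and> smulc k g j < 2^Suc j" for j by (simp add: smulc_def)
  have "{j. smulc k g j \<noteq> 0} \<subseteq> {j. g j \<noteq> 0}" by (auto simp: smulc_def)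
  then show "finite {j. smulc k g j \<noteq> 0}" using CC_fin[OF assms(1)]
    by (meson finite_subset)
qed

lemma addc_assoc: "addc (addc g h) k = addc g (addc h k)"
  by (simp add: addc_def mod_add_left_eq mod_add_right_eq add.assoc)

lemma addc_comm: "addc g h = addc h g"
  by (simp add: addc_def add.commute)

lemma addc_zero: assumes "g \<in> CC" shows "addc zeroc g = g"
proof
  fix j show "addc zeroc g j = g j" using CC_mod[OF assms, of j] unfolding addc_def zeroc_def by simp
qed

lemma addc_negc: "addc (negc g) g = zeroc"
  by (rule ext) (simp add: addc_def zeroc_def negc_def mod_add_left_eq)

lemma smulc_0: "smulc 0 g = zeroc"
  by (rule ext) (simp add: smulc_def zeroc_def)

lemma smulc_Suc: "smulc (Suc k) g = addc (smulc k g) g"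
  by (rule ext) (simp add: smulc_def addc_def mod_add_left_eq mod_add_right_eq distrib_right add.commute)

lemma countable_CC: "countable CC"
proof -
  define gr where "gr = (\<lambda>g::nat\<Rightarrow>int. {(j, g j) | j. g j \<noteq> 0})"
  have "inj_on gr CC"
  proof (rule inj_onI)
    fix g h assume "g \<in> CC" "h \<in> CC" "gr g = gr h"
    show "g = h"
    proof
      fix j
      show "g j = h j"
      proof (cases "g j = 0")
        case True
        then show ?thesis using \<open>gr g = gr h\<close> unfolding gr_def
          by (smt (verit, ccfv_threshold) Pair_inject mem_Collect_eq)
      next
        case False
        then have "(j, g j) \<in> gr h" using \<open>gr g = gr h\<close> unfolding gr_def by blast
        then show ?thesis unfolding gr_def by auto
      qed
    qed
  qed
  moreover have "gr ` CC \<subseteq> Collect finite"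
  proof
    fix S assume "S \<in> gr ` CC"
    then obtain g where g: "g \<in> CC" "S = gr g" by auto
    have "S = (\<lambda>j. (j, g j)) ` {j. g j \<noteq> 0}" using g unfolding gr_def by auto
    then show "S \<in> Collect finite" using CC_fin[OF g(1)] by auto
  qed
  ultimately show ?thesis
    by (meson countable_Collect_finite countable_image_inj_on countable_subset)
qed

definition enc :: "(nat \<Rightarrow> int) \<Rightarrow> real" where "enc g = real (to_nat_on CC g)"
definition AA :: "real set" where "AA = enc ` CC"
definition dec :: "real \<Rightarrow> (nat \<Rightarrow> int)" where "dec x = inv_into CC enc x"

lemma enc_inj: "inj_on enc CC"
  unfolding enc_def inj_on_def using to_nat_on_inj[OF countable_CC] by auto
lemma dec_enc[simp]: "g \<in> CC \<Longrightarrow> dec (enc g) = g"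
  unfolding dec_def by (simp add: enc_inj)
lemma enc_dec[simp]: "x \<in> AA \<Longrightarrow> enc (dec x) = x"
  unfolding dec_def AA_def by (simp add: f_inv_into_f)
lemma dec_CC[simp]: "x \<in> AA \<Longrightarrow> dec x \<in> CC"
  unfolding dec_def AA_def by (simp add: inv_into_into)
lemma enc_AA[simp]: "g \<in> CC \<Longrightarrow> enc g \<in> AA"
  unfolding AA_def by simp
lemma countable_AA: "countable AA"
  unfolding AA_def using countable_CC by simp

definition GG :: "real monoid" where
  "GG = \<lparr>carrier = AA, mult = (\<lambda>x y. enc (addc (dec x) (dec y))), one = enc zeroc\<rparr>"

lemma GG_carrier[simp]: "carrier GG = AA" by (simp add: GG_def)
lemma GG_mult: "x \<otimes>\<^bsub>GG\<^esub> y = enc (addc (dec x) (dec y))" by (simp add: GG_def)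
lemma GG_one: "\<one>\<^bsub>GG\<^esub> = enc zeroc" by (simp add: GG_def)

lemma group_GG: "group GG"
proof (rule groupI)
  fix x y assume "x \<in> carrier GG" "y \<in> carrier GG"
  then show "x \<otimes>\<^bsub>GG\<^esub> y \<in> carrier GG" by (simp add: GG_mult addc_CC)
next
  show "\<one>\<^bsub>GG\<^esub> \<in> carrier GG" by (simp add: GG_one zeroc_CC)
next
  fix x y z assume "x \<in> carrier GG" "y \<in> carrier GG" "z \<in> carrier GG"
  then show "x \<otimes>\<^bsub>GG\<^esub> y \<otimes>\<^bsub>GG\<^esub> z = x \<otimes>\<^bsub>GG\<^esub> (y \<otimes>\<^bsub>GG\<^esub> z)"
    by (simp add: GG_mult addc_CC addc_assoc)
next
  fix x assume "x \<in> carrier GG"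
  then show "\<one>\<^bsub>GG\<^esub> \<otimes>\<^bsub>GG\<^esub> x = x" by (simp add: GG_mult GG_one zeroc_CC addc_zero)
next
  fix x assume x: "x \<in> carrier GG"
  show "\<exists>y\<in>carrier GG. y \<otimes>\<^bsub>GG\<^esub> x = \<one>\<^bsub>GG\<^esub>"
    by (rule bexI[of _ "enc (negc (dec x))"]) (use x in \<open>simp_all add: GG_mult GG_one negc_CC addc_negc\<close>)
qed

interpretation GGg: group GG by (rule group_GG)

lemma GG_inv: assumes "x \<in> AA" shows "inv\<^bsub>GG\<^esub> x = enc (negc (dec x))"
proof -
  have "enc (negc (dec x)) \<otimes>\<^bsub>GG\<^esub> x = \<one>\<^bsub>GG\<^esub>"
    using assms by (simp add: GG_mult GG_one negc_CC addc_negc)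
  then show ?thesis using assms
    by (intro GGg.inv_equality) (simp_all add: negc_CC)
qed

lemma GG_pow: assumes "x \<in> AA" shows "x [^]\<^bsub>GG\<^esub> (k::nat) = enc (smulc k (dec x))"
proof (induction k)
  case 0
  then show ?case by (simp add: GG_one smulc_0)
next
  case (Suc k)
  then show ?case using assms by (simp add: GG_mult smulc_CC smulc_Suc)
qed

lemma range_eq_aux:
  fixes a b :: int
  assumes "0 \<le> a" "a < 2^Suc j" "0 \<le> b" "b < 2^Suc j" "a mod 2^n = b mod 2^n" "\<not> n \<le> Suc j"
  shows "a = b"
proof -
  have "Suc j \<le> n" using assms(6) by simp
  then have "(2::int)^Suc j \<le> 2^n" using power_increasing[of "Suc j" n "2::int"] by simp
  then have "a < 2^n" "b < 2^n" using assms(2,4) by linarith+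
  then have "a mod 2^n = a" "b mod 2^n = b" using assms(1,3) mod_pos_pos_trivial by blast+
  then show ?thesis using assms(5) by linarith
qed

lemma add_cong_aux:
  fixes a a' b b' :: int
  assumes "0 \<le> a" "a < 2^Suc j" "0 \<le> b" "b < 2^Suc j" "0 \<le> a'" "a' < 2^Suc j" "0 \<le> b'" "b' < 2^Suc j"
    "a mod 2^n = a' mod 2^n" "b mod 2^n = b' mod 2^n"
  shows "((a + b) mod 2^Suc j) mod 2^n = ((a' + b') mod 2^Suc j) mod 2^n"
proof (cases "n \<le> Suc j")
  case True
  then have d: "(2::int)^n dvd 2^Suc j" by (rule le_imp_power_dvd)
  show ?thesis unfolding mod_mod_cancel[OF d] using assms(9,10) by (rule mod_add_cong)
next
  case False
  then have "a = a'" "b = b'" using range_eq_aux assms by metis+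
  then show ?thesis by simp
qed

lemma neg_cong_aux:
  fixes a a' :: int
  assumes "0 \<le> a" "a < 2^Suc j" "0 \<le> a'" "a' < 2^Suc j" "a mod 2^n = a' mod 2^n"
  shows "((- a) mod 2^Suc j) mod 2^n = ((- a') mod 2^Suc j) mod 2^n"
proof (cases "n \<le> Suc j")
  case True
  then have d: "(2::int)^n dvd 2^Suc j" by (rule le_imp_power_dvd)
  show ?thesis unfolding mod_mod_cancel[OF d] using assms(5) by (rule mod_minus_cong)
next
  case False
  then have "a = a'" using range_eq_aux assms by metis
  then show ?thesis by simp
qed

definition phi :: "real \<Rightarrow> nat \<Rightarrow> (nat \<Rightarrow> int)" where "phi x n = (\<lambda>j. dec x j mod 2^n)"
definition fib :: "nat \<Rightarrow> real \<Rightarrow> real set" where "fib n x = {y \<in> AA. phi y n = phi x n}"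

lemma phi_mono: assumes "n \<le> m" "phi y m = phi x m" shows "phi y n = phi x n"
proof
  fix j
  have d: "(2::int)^n dvd 2^m" using assms(1) by (rule le_imp_power_dvd)
  have "dec y j mod 2^m = dec x j mod 2^m" using assms(2) unfolding phi_def by meson
  then have "dec y j mod 2^m mod 2^n = dec x j mod 2^m mod 2^n" by simp
  then show "phi y n j = phi x n j" unfolding phi_def mod_mod_cancel[OF d] .
qed

lemma fib_mono: "n \<le> m \<Longrightarrow> fib m x \<subseteq> fib n x"
  unfolding fib_def using phi_mono by blast

lemma fib_self: "x \<in> AA \<Longrightarrow> x \<in> fib n x" by (simp add: fib_def)
lemma fib_AA: "fib n x \<subseteq> AA" by (auto simp: fib_def)
lemma fib_sym: "y \<in> fib n x \<Longrightarrow> x \<in> AA \<Longrightarrow> fib n y = fib n x" by (auto simp: fib_def)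

definition opn :: "real set \<Rightarrow> bool" where
  "opn U \<longleftrightarrow> U \<subseteq> AA \<and> (\<forall>x\<in>U. \<exists>n. fib n x \<subseteq> U)"

lemma istopology_opn: "istopology opn"
  unfolding istopology_def
proof (intro conjI allI impI ballI)
  fix S T assume S: "opn S" and T: "opn T"
  show "opn (S \<inter> T)" unfolding opn_def
  proof (intro conjI ballI)
    show "S \<inter> T \<subseteq> AA" using S unfolding opn_def by auto
    fix x assume "x \<in> S \<inter> T"
    then obtain n m where "fib n x \<subseteq> S" "fib m x \<subseteq> T" using S T unfolding opn_def by blast
    then have "fib (max n m) x \<subseteq> S \<inter> T" using fib_mono[of n "max n m" x] fib_mono[of m "max n m" x] by auto
    then show "\<exists>n. fib n x \<subseteq> S \<inter> T" by blast
  qed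
next
  fix K assume K: "\<forall>S\<in>K. opn S"
  show "opn (\<Union>K)" unfolding opn_def
  proof (intro conjI ballI)
    show "\<Union>K \<subseteq> AA" using K unfolding opn_def by auto
    fix x assume "x \<in> \<Union>K"
    then obtain S where "S \<in> K" "x \<in> S" by auto
    then obtain n where "fib n x \<subseteq> S" using K unfolding opn_def by blast
    then show "\<exists>n. fib n x \<subseteq> \<Union>K" using \<open>S \<in> K\<close> by blast
  qed
qed

definition TT :: "real topology" where "TT = topology opn"

lemma openin_TT: "openin TT U \<longleftrightarrow> U \<subseteq> AA \<and> (\<forall>x\<in>U. \<exists>n. fib n x \<subseteq> U)"
  unfolding TT_def topology_inverse'[OF istopology_opn] opn_def ..

lemma topspace_TT[simp]: "topspace TT = AA"
proof -
  have "openin TT AA" unfolding openin_TT using fib_AA by blast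
  then have "AA \<subseteq> topspace TT" by (rule openin_subset)
  moreover have "topspace TT \<subseteq> AA" using openin_topspace[of TT] unfolding openin_TT by blast
  ultimately show ?thesis by blast
qed

lemma openin_fib: "x \<in> AA \<Longrightarrow> openin TT (fib n x)"
  unfolding openin_TT
proof (intro conjI ballI)
  show "fib n x \<subseteq> AA" by (rule fib_AA)
  fix y assume "y \<in> fib n x" "x \<in> AA"
  then have "fib n y = fib n x" by (rule fib_sym)
  then show "\<exists>m. fib m y \<subseteq> fib n x" by blast
qed

lemma phi_mult: assumes "x \<in> AA" "y \<in> AA" "x' \<in> AA" "y' \<in> AA" "phi x n = phi x' n" "phi y n = phi y' n"
  shows "phi (x \<otimes>\<^bsub>GG\<^esub> y) n = phi (x' \<otimes>\<^bsub>GG\<^esub> y') n"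
proof
  fix j
  have e1: "dec x j mod 2^n = dec x' j mod 2^n" "dec y j mod 2^n = dec y' j mod 2^n"
    using assms(5,6) unfolding phi_def by meson+
  have r: "0 \<le> dec z j \<and> dec z j < 2^Suc j" if "z \<in> AA" for z using that by (intro CC_D) simp
  have "((dec x j + dec y j) mod 2^Suc j) mod 2^n = ((dec x' j + dec y' j) mod 2^Suc j) mod 2^n"
    using r[OF assms(1)] r[OF assms(2)] r[OF assms(3)] r[OF assms(4)] e1 by (intro add_cong_aux) auto
  then show "phi (x \<otimes>\<^bsub>GG\<^esub> y) n j = phi (x' \<otimes>\<^bsub>GG\<^esub> y') n j"
    using assms(1-4) unfolding phi_def GG_mult by (simp add: addc_CC del: power_Suc) (simp add: addc_def)
qed

lemma phi_inv: assumes "x \<in> AA" "x' \<in> AA" "phi x n = phi x' n"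
  shows "phi (inv\<^bsub>GG\<^esub> x) n = phi (inv\<^bsub>GG\<^esub> x') n"
proof
  fix j
  have e1: "dec x j mod 2^n = dec x' j mod 2^n"
    using assms(3) unfolding phi_def by meson
  have r: "0 \<le> dec z j \<and> dec z j < 2^Suc j" if "z \<in> AA" for z using that by (intro CC_D) simp
  have "((- dec x j) mod 2^Suc j) mod 2^n = ((- dec x' j) mod 2^Suc j) mod 2^n"
    using r[OF assms(1)] r[OF assms(2)] e1 by (intro neg_cong_aux) auto
  then show "phi (inv\<^bsub>GG\<^esub> x) n j = phi (inv\<^bsub>GG\<^esub> x') n j"
    using assms(1-2) unfolding phi_def GG_inv[OF assms(1)] GG_inv[OF assms(2)] by (simp add: negc_CC del: power_Suc) (simp add: negc_def)
qed

lemma cont_inv: "continuous_map TT TT (\<lambda>x. inv\<^bsub>GG\<^esub> x)"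
  unfolding continuous_map
proof (intro conjI allI impI)
  show "(\<lambda>x. inv\<^bsub>GG\<^esub> x) ` topspace TT \<subseteq> topspace TT" using GGg.inv_closed by auto
  fix U assume U: "openin TT U"
  show "openin TT {x \<in> topspace TT. inv\<^bsub>GG\<^esub> x \<in> U}"
    unfolding openin_TT topspace_TT
  proof (intro conjI ballI)
    show "{x \<in> AA. inv\<^bsub>GG\<^esub> x \<in> U} \<subseteq> AA" by blast
    fix x assume x: "x \<in> {x \<in> AA. inv\<^bsub>GG\<^esub> x \<in> U}"
    then obtain n where n: "fib n (inv\<^bsub>GG\<^esub> x) \<subseteq> U" using U unfolding openin_TT by blast
    have "fib n x \<subseteq> {x \<in> AA. inv\<^bsub>GG\<^esub> x \<in> U}"
    proof
      fix y assume y: "y \<in> fib n x"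
      then have "y \<in> AA" "phi y n = phi x n" by (auto simp: fib_def)
      then have "phi (inv\<^bsub>GG\<^esub> y) n = phi (inv\<^bsub>GG\<^esub> x) n" using x phi_inv by blast
      then have "inv\<^bsub>GG\<^esub> y \<in> fib n (inv\<^bsub>GG\<^esub> x)" using \<open>y \<in> AA\<close> GGg.inv_closed by (auto simp: fib_def)
      then show "y \<in> {x \<in> AA. inv\<^bsub>GG\<^esub> x \<in> U}" using n \<open>y \<in> AA\<close> by auto
    qed
    then show "\<exists>n. fib n x \<subseteq> {x \<in> AA. inv\<^bsub>GG\<^esub> x \<in> U}" by blast
  qed
qed

lemma cont_mult: "continuous_map (prod_topology TT TT) TT (\<lambda>(x, y). x \<otimes>\<^bsub>GG\<^esub> y)"
  unfolding continuous_map
proof (intro conjI allI impI)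
  show "(\<lambda>(x, y). x \<otimes>\<^bsub>GG\<^esub> y) ` topspace (prod_topology TT TT) \<subseteq> topspace TT"
    using GGg.m_closed by auto
  fix U assume U: "openin TT U"
  let ?S = "{p \<in> topspace (prod_topology TT TT). (case p of (x, y) \<Rightarrow> x \<otimes>\<^bsub>GG\<^esub> y) \<in> U}"
  show "openin (prod_topology TT TT) ?S"
  proof (subst openin_subopen, intro ballI)
    fix p assume p: "p \<in> ?S"
    obtain x y where xy: "p = (x, y)" "x \<in> AA" "y \<in> AA" "x \<otimes>\<^bsub>GG\<^esub> y \<in> U" using p by auto
    then obtain n where n: "fib n (x \<otimes>\<^bsub>GG\<^esub> y) \<subseteq> U" using U unfolding openin_TT by blast
    have "fib n x \<times> fib n y \<subseteq> ?S"
    proof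
      fix q assume q: "q \<in> fib n x \<times> fib n y"
      then obtain x' y' where q': "q = (x', y')" "x' \<in> AA" "y' \<in> AA" "phi x' n = phi x n" "phi y' n = phi y n"
        by (auto simp: fib_def)
      then have "phi (x' \<otimes>\<^bsub>GG\<^esub> y') n = phi (x \<otimes>\<^bsub>GG\<^esub> y) n" using xy phi_mult by blast
      then have "x' \<otimes>\<^bsub>GG\<^esub> y' \<in> fib n (x \<otimes>\<^bsub>GG\<^esub> y)" using q' GGg.m_closed by (auto simp: fib_def)
      then show "q \<in> ?S" using n q' by auto
    qed
    moreover have "openin (prod_topology TT TT) (fib n x \<times> fib n y)"
      using openin_fib xy by (simp add: openin_prod_Times_iff)
    moreover have "p \<in> fib n x \<times> fib n y" using xy fib_self by auto
    ultimately show "\<exists>T. openin (prod_topology TT TT) T \<and> p \<in> T \<and> T \<subseteq> ?S" by blast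
  qed
qed

definition PP :: "(nat \<Rightarrow> (nat \<Rightarrow> int)) topology" where
  "PP = product_topology (\<lambda>_. discrete_topology UNIV) UNIV"

lemma topspace_PP[simp]: "topspace PP = UNIV"
  unfolding PP_def by (simp add: PiE_UNIV_domain)

lemma metrizable_PP: "metrizable_space PP"
  unfolding PP_def by (simp add: metrizable_space_product_topology)

lemma inj_phi: "inj_on phi AA"
proof (rule inj_onI)
  fix x y assume x: "x \<in> AA" and y: "y \<in> AA" and e: "phi x = phi y"
  have "dec x = dec y"
  proof
    fix j
    have "phi x (Suc j) j = phi y (Suc j) j" using e by simp
    then show "dec x j = dec y j" unfolding phi_def using CC_mod[of "dec x" j] CC_mod[of "dec y" j] x y
      by (simp del: power_Suc)
  qed
  then show "x = y" using x y enc_dec by metis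
qed

lemma cont_phi: "continuous_map TT PP phi"
  unfolding PP_def continuous_map_componentwise_UNIV
proof
  fix k
  show "continuous_map TT (discrete_topology UNIV) (\<lambda>x. phi x k)"
    unfolding continuous_map
  proof (intro conjI allI impI)
    show "(\<lambda>x. phi x k) ` topspace TT \<subseteq> topspace (discrete_topology UNIV)" by simp
    fix U :: "(nat \<Rightarrow> int) set"
    show "openin TT {x \<in> topspace TT. phi x k \<in> U}"
      unfolding openin_TT topspace_TT
    proof (intro conjI ballI)
      show "{x \<in> AA. phi x k \<in> U} \<subseteq> AA" by blast
      fix x assume "x \<in> {x \<in> AA. phi x k \<in> U}"
      then have "fib k x \<subseteq> {x \<in> AA. phi x k \<in> U}" by (auto simp: fib_def)
      then show "\<exists>n. fib n x \<subseteq> {x \<in> AA. phi x k \<in> U}" by blast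
    qed
  qed
qed

lemma open_phi: "open_map TT (subtopology PP (phi ` AA)) phi"
  unfolding open_map_def
proof (intro allI impI)
  fix U assume U: "openin TT U"
  then have UA: "U \<subseteq> AA" and nx: "\<forall>x\<in>U. \<exists>n. fib n x \<subseteq> U" unfolding openin_TT by auto
  then obtain N where N: "\<And>x. x \<in> U \<Longrightarrow> fib (N x) x \<subseteq> U" by metis
  define W where "W = (\<Union>x\<in>U. {z. z (N x) = phi x (N x)})"
  have "openin PP {z. z (N x) = phi x (N x)}" for x
  proof -
    have "openin PP {z \<in> topspace PP. z (N x) \<in> {phi x (N x)}}"
      unfolding PP_def
      by (rule openin_continuous_map_preimage[OF continuous_map_product_projection]) auto
    then show ?thesis by simp
  qed
  then have "openin PP W" unfolding W_def by blast
  moreover have "phi ` U = phi ` AA \<inter> W"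
  proof
    show "phi ` U \<subseteq> phi ` AA \<inter> W" using UA unfolding W_def by auto
    show "phi ` AA \<inter> W \<subseteq> phi ` U"
    proof
      fix z assume "z \<in> phi ` AA \<inter> W"
      then obtain y x where y: "y \<in> AA" "z = phi y" and x: "x \<in> U" "phi y (N x) = phi x (N x)"
        unfolding W_def by auto
      then have "y \<in> fib (N x) x" by (simp add: fib_def)
      then have "y \<in> U" using N x by blast
      then show "z \<in> phi ` U" using y by blast
    qed
  qed
  ultimately show "openin (subtopology PP (phi ` AA)) (phi ` U)"
    by (simp add: openin_subtopology_Int2)
qed

lemma homeo_phi: "homeomorphic_map TT (subtopology PP (phi ` AA)) phi"
proof (rule bijective_open_imp_homeomorphic_map)
  show "continuous_map TT (subtopology PP (phi ` AA)) phi"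
    using cont_phi by (simp add: continuous_map_in_subtopology)
  show "open_map TT (subtopology PP (phi ` AA)) phi" by (rule open_phi)
  show "phi ` topspace TT = topspace (subtopology PP (phi ` AA))" by simp
  show "inj_on phi (topspace TT)" using inj_phi by simp
qed

lemma metrizable_TT: "metrizable_space TT"
proof -
  have "TT homeomorphic_space (subtopology PP (phi ` AA))"
    by (rule homeomorphic_map_imp_homeomorphic_space[OF homeo_phi])
  moreover have "metrizable_space (subtopology PP (phi ` AA))"
    by (simp add: metrizable_PP metrizable_space_subtopology)
  ultimately show ?thesis using homeomorphic_metrizable_space by blast
qed

lemma Hausdorff_TT: "Hausdorff_space TT"
  by (rule metrizable_imp_Hausdorff_space[OF metrizable_TT])

lemma separable_TT: "separable_space TT"
  unfolding separable_space_def
  by (rule exI[of _ AA]) (metis countable_AA closure_of_topspace topspace_TT order_refl)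

lemma topgroup_GG: "topological_group GG TT"
  unfolding topological_group_def
  using group_GG Hausdorff_TT cont_mult cont_inv by simp

lemma L1:
  fixes a c :: int
  assumes "0 \<le> a" "a < 2^Suc j"
  shows "((a + (2^n * c) mod 2^Suc j) mod 2^Suc j) mod 2^n = a mod 2^n"
proof (cases "n \<le> Suc j")
  case True
  then have d: "(2::int)^n dvd 2^Suc j" by (rule le_imp_power_dvd)
  have "((a + (2^n * c) mod 2^Suc j) mod 2^Suc j) mod 2^n = (a + (2^n * c) mod 2^Suc j) mod 2^n"
    by (rule mod_mod_cancel[OF d])
  also have "\<dots> = (a + 2^n * c) mod 2^n"
    by (metis d mod_add_right_eq mod_mod_cancel)
  also have "\<dots> = a mod 2^n" by simp
  finally show ?thesis .
next
  case False
  then have "Suc j \<le> n" by simp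
  then have d: "(2::int)^Suc j dvd 2^n" by (rule le_imp_power_dvd)
  then have "(2^n * c) mod 2^Suc j = 0" by (simp add: dvd_mult2)
  then have "(a + (2^n * c) mod 2^Suc j) mod 2^Suc j = a" using assms by simp
  then show ?thesis by simp
qed

lemma L2:
  fixes a b :: int
  assumes "0 \<le> a" "a < 2^Suc j" "0 \<le> b" "b < 2^Suc j" "a mod 2^n = b mod 2^n"
  shows "(a + (2^n * (((b - a) mod 2^Suc j) div 2^n)) mod 2^Suc j) mod 2^Suc j = b"
proof (cases "n \<le> Suc j")
  case True
  then have d: "(2::int)^n dvd 2^Suc j" by (rule le_imp_power_dvd)
  have "b mod 2^n = a mod 2^n" using assms(5) by simp
  then have "(2::int)^n dvd (b - a)" by (simp add: mod_eq_dvd_iff)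
  then have "(2::int)^n dvd ((b - a) mod 2^Suc j)" using d by (simp add: dvd_mod)
  then have e: "2^n * (((b - a) mod 2^Suc j) div 2^n) = (b - a) mod 2^Suc j" by simp
  have "(a + (b - a) mod 2^Suc j mod 2^Suc j) mod 2^Suc j = (a + (b - a)) mod 2^Suc j"
    by (simp add: mod_add_right_eq)
  also have "\<dots> = b" using assms(3,4) by simp
  finally show ?thesis unfolding e by simp
next
  case False
  then have "a = b" using range_eq_aux assms by metis
  then show ?thesis using assms(1,2) by simp
qed

lemma fib_pow1:
  assumes x: "x \<in> AA" and z: "z \<in> AA"
  shows "phi (x \<otimes>\<^bsub>GG\<^esub> z [^]\<^bsub>GG\<^esub> ((2::nat)^n)) n = phi x n"
proof
  fix j
  have r: "0 \<le> dec x j" "dec x j < 2^Suc j" using CC_D[of "dec x" j] x by auto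
  show "phi (x \<otimes>\<^bsub>GG\<^esub> z [^]\<^bsub>GG\<^esub> ((2::nat)^n)) n j = phi x n j"
    using x z r unfolding phi_def GG_pow[OF z] GG_mult
    by (simp add: smulc_CC addc_CC del: power_Suc) (simp add: addc_def smulc_def L1 del: power_Suc)
qed

lemma fib_pow2:
  assumes x: "x \<in> AA" and y: "y \<in> AA" and e: "phi y n = phi x n"
  shows "\<exists>z\<in>AA. y = x \<otimes>\<^bsub>GG\<^esub> z [^]\<^bsub>GG\<^esub> ((2::nat)^n)"
proof -
  define zc where "zc = (\<lambda>j. ((dec y j - dec x j) mod 2^Suc j) div (2::int)^n)"
  have zcC: "zc \<in> CC"
  proof (rule CC_I)
    fix j
    define d where "d = (dec y j - dec x j) mod 2^Suc j"
    have d: "0 \<le> d" "d < 2^Suc j" unfolding d_def by simp_all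
    have "0 \<le> d div 2^n" using d(1) by (simp add: pos_imp_zdiv_nonneg_iff)
    moreover have "d div 2^n \<le> d"
    proof (cases "d = 0")
      case True then show ?thesis by simp
    next
      case False then show ?thesis using d(1) int_div_le_self by simp
    qed
    ultimately show "0 \<le> zc j \<and> zc j < 2^Suc j" unfolding zc_def d_def[symmetric] using d by linarith
  next
    have "{j. zc j \<noteq> 0} \<subseteq> {j. dec y j \<noteq> 0} \<union> {j. dec x j \<noteq> 0}" unfolding zc_def by auto
    then show "finite {j. zc j \<noteq> 0}" using CC_fin[of "dec x"] CC_fin[of "dec y"] x y
      by (meson dec_CC finite_Un finite_subset)
  qed
  have "addc (dec x) (smulc (2^n) zc) = dec y"
  proof
    fix j
    have r: "0 \<le> dec x j" "dec x j < 2^Suc j" "0 \<le> dec y j" "dec y j < 2^Suc j"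
      using CC_D[of "dec x" j] CC_D[of "dec y" j] x y by auto
    have m: "dec x j mod 2^n = dec y j mod 2^n" using e unfolding phi_def by metis
    show "addc (dec x) (smulc (2^n) zc) j = dec y j"
      unfolding addc_def smulc_def zc_def using L2[OF r m] by simp
  qed
  then have "y = x \<otimes>\<^bsub>GG\<^esub> enc zc [^]\<^bsub>GG\<^esub> ((2::nat)^n)"
    using x y zcC by (simp add: GG_pow GG_mult smulc_CC)
  then show ?thesis using zcC by auto
qed

lemma g_rev_GG: "g_reversible GG TT"
  unfolding g_reversible_def
proof (intro allI impI)
  fix f assume "f \<in> iso GG GG \<and> continuous_map TT TT f"
  then have hom: "f \<in> hom GG GG" and bij: "bij_betw f AA AA" unfolding iso_def by auto
  have fA: "f x \<in> AA" if "x \<in> AA" for x using bij that by (auto simp: bij_betw_def)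
  show "open_map TT TT f" unfolding open_map_def
  proof (intro allI impI)
    fix U assume U: "openin TT U"
    then have UA: "U \<subseteq> AA" unfolding openin_TT by blast
    show "openin TT (f ` U)" unfolding openin_TT
    proof (intro conjI ballI)
      show "f ` U \<subseteq> AA" using UA fA by auto
      fix y assume "y \<in> f ` U"
      then obtain x where x: "x \<in> U" "y = f x" by auto
      then have xA: "x \<in> AA" using UA by auto
      obtain n where n: "fib n x \<subseteq> U" using U x unfolding openin_TT by blast
      have "fib n y \<subseteq> f ` U"
      proof
        fix y' assume "y' \<in> fib n y"
        then have y'A: "y' \<in> AA" and e: "phi y' n = phi (f x) n" using x by (auto simp: fib_def)
        obtain w where w: "w \<in> AA" "y' = f x \<otimes>\<^bsub>GG\<^esub> w [^]\<^bsub>GG\<^esub> ((2::nat)^n)"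
          using fib_pow2[OF fA[OF xA] y'A e] by blast
        obtain z where z: "z \<in> AA" "w = f z" using bij w(1) by (metis bij_betw_imp_surj_on imageE)
        have "f (x \<otimes>\<^bsub>GG\<^esub> z [^]\<^bsub>GG\<^esub> ((2::nat)^n)) = f x \<otimes>\<^bsub>GG\<^esub> f (z [^]\<^bsub>GG\<^esub> ((2::nat)^n))"
          by (rule hom_mult[OF hom]) (use xA z in \<open>simp_all add: GG_pow smulc_CC\<close>)
        also have "f (z [^]\<^bsub>GG\<^esub> ((2::nat)^n)) = f z [^]\<^bsub>GG\<^esub> ((2::nat)^n)"
          using z(1) by (simp add: hom_nat_pow[OF hom _ group_GG group_GG])
        finally have "y' = f (x \<otimes>\<^bsub>GG\<^esub> z [^]\<^bsub>GG\<^esub> ((2::nat)^n))" using w z by simp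
        moreover have "x \<otimes>\<^bsub>GG\<^esub> z [^]\<^bsub>GG\<^esub> ((2::nat)^n) \<in> fib n x"
          using fib_pow1[OF xA z(1)] xA z(1) by (simp add: fib_def GG_pow GG_mult smulc_CC addc_CC)
        ultimately show "y' \<in> f ` U" using n by blast
      qed
      then show "\<exists>n. fib n y \<subseteq> f ` U" by blast
    qed
  qed
qed

definition HC :: "(nat \<Rightarrow> int) set" where "HC = {g \<in> CC. \<forall>j. g j = 0 \<or> g j = 2^j}"
definition HH :: "real set" where "HH = enc ` HC"

lemma HC_CC: "g \<in> HC \<Longrightarrow> g \<in> CC" by (simp add: HC_def)
lemma HC_val: "g \<in> HC \<Longrightarrow> g j = 0 \<or> g j = 2^j" by (simp add: HC_def)
lemma HC_val2: "g \<in> HC \<Longrightarrow> g j = (if g j \<noteq> 0 then 2^j else 0)" using HC_val by force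

lemma HC_I: assumes "\<And>j. g j = 0 \<or> g j = 2^j" "finite {j. g j \<noteq> 0}" shows "g \<in> HC"
proof -
  have "0 \<le> g j \<and> g j < 2^Suc j" for j using assms(1)[of j] by auto
  then show ?thesis unfolding HC_def using CC_I assms by blast
qed

lemma HC_ext: assumes "g \<in> HC" "h \<in> HC" "\<And>j. (g j \<noteq> 0) = (h j \<noteq> 0)" shows "g = h"
proof
  fix j show "g j = h j" using HC_val2[OF assms(1), of j] HC_val2[OF assms(2), of j] assms(3)[of j] by simp
qed

lemma HH_AA: "HH \<subseteq> AA" unfolding HH_def AA_def using HC_CC by blast
lemma dec_HH: assumes "x \<in> HH" shows "dec x \<in> HC"
proof -
  obtain g where "g \<in> HC" "x = enc g" using assms unfolding HH_def by blast
  then show ?thesis using HC_CC dec_enc by simp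
qed
lemma enc_HH: "g \<in> HC \<Longrightarrow> enc g \<in> HH" unfolding HH_def by blast
lemma HH_iff: "x \<in> HH \<longleftrightarrow> x \<in> AA \<and> dec x \<in> HC"
proof
  assume "x \<in> HH" then show "x \<in> AA \<and> dec x \<in> HC" using HH_AA dec_HH by blast
next
  assume "x \<in> AA \<and> dec x \<in> HC"
  then have "enc (dec x) \<in> HH" "enc (dec x) = x" using enc_HH enc_dec by blast+
  then show "x \<in> HH" by simp
qed

lemma zeroc_HC: "zeroc \<in> HC" by (rule HC_I) (auto simp: zeroc_def)

lemma pow_lt: "(2::int)^j < 2^Suc j"
  by (rule power_strict_increasing) auto
lemma pow_mod_self: "(2::int)^j mod 2^Suc j = 2^j"
  by (rule mod_pos_pos_trivial) (auto simp only: pow_lt zero_le_power zero_le_numeral)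
lemma pow_double: "(2::int)^j + 2^j = 2^Suc j"
  by (simp only: power_Suc mult_2)
lemma pow_double_mod: "((2::int)^j + 2^j) mod 2^Suc j = 0"
  by (simp only: pow_double mod_self)
lemma neg_pow_mod: "(- ((2::int)^j)) mod 2^Suc j = 2^j"
proof -
  have "(- ((2::int)^j)) mod 2^Suc j = (2^Suc j - 2^j) mod 2^Suc j"
    by (metis (no_types) diff_0 mod_diff_left_eq mod_self)
  also have "(2::int)^Suc j - 2^j = 2^j" using pow_double[of j] by linarith
  finally show ?thesis using pow_mod_self by simp
qed

lemma addc_bit: assumes "g \<in> HC" "h \<in> HC"
  shows "addc g h j = (if (g j \<noteq> 0) \<noteq> (h j \<noteq> 0) then 2^j else 0)"
  using HC_val[OF assms(1), of j] HC_val[OF assms(2), of j]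
  unfolding addc_def by (auto simp only: pow_mod_self pow_double_mod add_0 add_0_right mod_0 power_not_zero zero_neq_numeral if_True if_False simp_thms not_False_eq_True)

lemma addc_HC: assumes "g \<in> HC" "h \<in> HC" shows "addc g h \<in> HC"
proof (rule HC_I)
  show "addc g h j = 0 \<or> addc g h j = 2^j" for j using addc_bit[OF assms] by simp
  show "finite {j. addc g h j \<noteq> 0}" using addc_CC[OF HC_CC[OF assms(1)] HC_CC[OF assms(2)]] CC_fin by blast
qed

lemma negc_HC: assumes "g \<in> HC" shows "negc g = g"
proof
  fix j show "negc g j = g j" using HC_val[OF assms, of j] neg_pow_mod[of j]
    unfolding negc_def by (auto simp only: minus_zero mod_0)
qed

lemma subgroup_HH: "subgroup HH GG"
proof (rule GGg.subgroupI)
  show "HH \<subseteq> carrier GG" using HH_AA by simp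
  show "HH \<noteq> {}" using enc_HH[OF zeroc_HC] by blast
  fix a assume a: "a \<in> HH"
  then have aA: "a \<in> AA" using HH_AA by blast
  have "inv\<^bsub>GG\<^esub> a = enc (negc (dec a))" by (rule GG_inv[OF aA])
  also have "\<dots> = a" using negc_HC[OF dec_HH[OF a]] enc_dec[OF aA] by simp
  finally show "inv\<^bsub>GG\<^esub> a \<in> HH" using a by simp
  fix b assume b: "b \<in> HH"
  then show "a \<otimes>\<^bsub>GG\<^esub> b \<in> HH" using a by (simp add: GG_mult addc_HC dec_HH enc_HH)
qed

lemma countable_HH: "countable HH" using HH_AA countable_AA countable_subset by blast

lemma closed_HH: "closedin TT HH"
  unfolding closedin_def topspace_TT
proof (intro conjI)
  show "HH \<subseteq> AA" by (rule HH_AA)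
  show "openin TT (AA - HH)" unfolding openin_TT
  proof (intro conjI ballI)
    show "AA - HH \<subseteq> AA" by blast
    fix x assume x: "x \<in> AA - HH"
    then have "dec x \<notin> HC" using HH_iff by blast
    moreover have "finite {j. dec x j \<noteq> 0}" using x CC_fin by auto
    ultimately obtain j where j: "dec x j \<noteq> 0" "dec x j \<noteq> 2^j" using HC_I by blast
    have "fib (Suc j) x \<subseteq> AA - HH"
    proof
      fix y assume "y \<in> fib (Suc j) x"
      then have y: "y \<in> AA" "dec y j mod 2^Suc j = dec x j mod 2^Suc j"
        unfolding fib_def phi_def by (auto dest: fun_cong[where x = j])
      then have "dec y j = dec x j" using x CC_mod[of "dec y" j] CC_mod[of "dec x" j] by auto
      then have "dec y \<notin> HC" using j HC_val by metis
      then show "y \<in> AA - HH" using y HH_iff by blast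
    qed
    then show "\<exists>n. fib n x \<subseteq> AA - HH" by blast
  qed
qed

lemma openin_sub: assumes "B \<subseteq> AA"
  shows "openin (subtopology TT B) S \<longleftrightarrow> S \<subseteq> B \<and> (\<forall>x\<in>S. \<exists>n. fib n x \<inter> B \<subseteq> S)"
proof
  assume "openin (subtopology TT B) S"
  then obtain T where T: "openin TT T" "S = T \<inter> B" unfolding openin_subtopology by blast
  show "S \<subseteq> B \<and> (\<forall>x\<in>S. \<exists>n. fib n x \<inter> B \<subseteq> S)"
  proof (intro conjI ballI)
    show "S \<subseteq> B" using T by blast
    fix x assume "x \<in> S"
    then obtain n where "fib n x \<subseteq> T" using T unfolding openin_TT by blast
    then show "\<exists>n. fib n x \<inter> B \<subseteq> S" using T by blast
  qed
next
  assume S: "S \<subseteq> B \<and> (\<forall>x\<in>S. \<exists>n. fib n x \<inter> B \<subseteq> S)"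
  then obtain N where N: "\<And>x. x \<in> S \<Longrightarrow> fib (N x) x \<inter> B \<subseteq> S" by metis
  define T where "T = (\<Union>x\<in>S. fib (N x) x)"
  have "openin TT T" unfolding T_def using S assms openin_fib by blast
  moreover have "S = T \<inter> B"
  proof
    show "S \<subseteq> T \<inter> B" unfolding T_def using S assms fib_self by blast
    show "T \<inter> B \<subseteq> S" unfolding T_def using N by blast
  qed
  ultimately show "openin (subtopology TT B) S" unfolding openin_subtopology by blast
qed

lemma upd_simps: "carrier (GG\<lparr>carrier := HH\<rparr>) = HH"
  "\<one>\<^bsub>GG\<lparr>carrier := HH\<rparr>\<^esub> = \<one>\<^bsub>GG\<^esub>"
  "x \<otimes>\<^bsub>GG\<lparr>carrier := HH\<rparr>\<^esub> y = x \<otimes>\<^bsub>GG\<^esub> y"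
  by simp_all

definition low :: "nat set \<Rightarrow> nat \<Rightarrow> int" where "low S = (\<lambda>j. if j \<in> S then 2^j else 0)"

lemma low_HC: "finite S \<Longrightarrow> low S \<in> HC"
  by (rule HC_I) (auto simp: low_def)

lemma HC_mod_small: assumes "g \<in> HC" "j < m" shows "g j mod 2^m = g j"
proof -
  have "(2::int)^j < 2^m" using assms(2) by (rule power_strict_increasing) auto
  then show ?thesis using HC_val[OF assms(1), of j] by auto
qed

lemma HC_mod_big: assumes "g \<in> HC" "m \<le> j" shows "g j mod 2^m = 0"
proof -
  have "(2::int)^m dvd 2^j" using assms(2) by (rule le_imp_power_dvd)
  then show ?thesis using HC_val[OF assms(1), of j] by auto
qed

lemma precompact_HH: "precompact_group (GG\<lparr>carrier := HH\<rparr>) (subtopology TT HH)"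
  unfolding precompact_group_def upd_simps
proof (intro allI impI)
  fix U assume A: "U \<subseteq> HH \<and> (\<exists>V. openin (subtopology TT HH) V \<and> \<one>\<^bsub>GG\<^esub> \<in> V \<and> V \<subseteq> U)"
  then obtain V where UH: "U \<subseteq> HH" and V: "openin (subtopology TT HH) V" "enc zeroc \<in> V" "V \<subseteq> U"
    by (auto simp: GG_one)
  obtain n where n: "fib n (enc zeroc) \<inter> HH \<subseteq> V" using V openin_sub[OF HH_AA] by blast
  define F where "F = (\<lambda>S. enc (low S)) ` Pow {..<n}"
  have finF: "finite F" unfolding F_def by simp
  have FH: "F \<subseteq> HH" unfolding F_def using low_HC enc_HH finite_subset by blast
  have "F <#>\<^bsub>GG\<lparr>carrier := HH\<rparr>\<^esub> U = HH"
    unfolding set_mult_def upd_simps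
  proof
    show "(\<Union>h\<in>F. \<Union>k\<in>U. {h \<otimes>\<^bsub>GG\<^esub> k}) \<subseteq> HH"
      using FH UH subgroup.m_closed[OF subgroup_HH] by blast
    show "HH \<subseteq> (\<Union>h\<in>F. \<Union>k\<in>U. {h \<otimes>\<^bsub>GG\<^esub> k})"
    proof
      fix h assume h: "h \<in> HH"
      define g where "g = dec h"
      have gH: "g \<in> HC" unfolding g_def using dec_HH[OF h] .
      define S where "S = {j. j < n \<and> g j \<noteq> 0}"
      define hi where "hi = (\<lambda>j. if n \<le> j then g j else 0)"
      have hiH: "hi \<in> HC"
      proof (rule HC_I)
        show "hi j = 0 \<or> hi j = 2^j" for j using HC_val[OF gH, of j] by (auto simp: hi_def)
        have "{j. hi j \<noteq> 0} \<subseteq> {j. g j \<noteq> 0}" by (auto simp: hi_def)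
        then show "finite {j. hi j \<noteq> 0}" using CC_fin[OF HC_CC[OF gH]] finite_subset by blast
      qed
      have SH: "low S \<in> HC" by (rule low_HC) (simp add: S_def)
      have "phi (enc hi) n = phi (enc zeroc) n"
      proof
        fix j
        show "phi (enc hi) n j = phi (enc zeroc) n j"
          unfolding phi_def using HC_CC[OF hiH] zeroc_CC HC_mod_big[OF hiH, of n j]
          by (cases "n \<le> j") (simp_all add: hi_def zeroc_def)
      qed
      then have "enc hi \<in> fib n (enc zeroc) \<inter> HH" using hiH HC_CC enc_HH by (simp add: fib_def)
      then have hiU: "enc hi \<in> U" using n V by blast
      have "addc (low S) hi = g"
      proof (rule HC_ext[OF addc_HC[OF SH hiH] gH])
        fix j show "(addc (low S) hi j \<noteq> 0) = (g j \<noteq> 0)"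
          unfolding addc_bit[OF SH hiH] by (auto simp: low_def hi_def S_def)
      qed
      then have "h = enc (low S) \<otimes>\<^bsub>GG\<^esub> enc hi"
        using SH hiH HC_CC h HH_AA unfolding GG_mult g_def by (simp add: subset_iff)
      moreover have "enc (low S) \<in> F" unfolding F_def S_def by auto
      ultimately show "h \<in> (\<Union>h\<in>F. \<Union>k\<in>U. {h \<otimes>\<^bsub>GG\<^esub> k})" using hiU by blast
    qed
  qed
  then show "\<exists>F. finite F \<and> F \<subseteq> HH \<and> F <#>\<^bsub>GG\<lparr>carrier := HH\<rparr>\<^esub> U = HH"
    using finF FH by blast
qed

definition psi :: "(nat \<Rightarrow> int) \<Rightarrow> (nat \<Rightarrow> int)" where
  "psi g = (\<lambda>j. if (g j \<noteq> 0) \<noteq> (g (Suc j) \<noteq> 0) then 2^j else 0)"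
definition chi :: "(nat \<Rightarrow> int) \<Rightarrow> (nat \<Rightarrow> int)" where
  "chi g = (\<lambda>j. if odd (card {i. j \<le> i \<and> g i \<noteq> 0}) then 2^j else 0)"

lemma psi_bit: "(psi g j \<noteq> 0) = ((g j \<noteq> 0) \<noteq> (g (Suc j) \<noteq> 0))"
  by (simp add: psi_def)

lemma psi_HC: assumes "g \<in> HC" shows "psi g \<in> HC"
proof (rule HC_I)
  show "psi g j = 0 \<or> psi g j = 2^j" for j by (simp add: psi_def)
  have f: "finite {j. g j \<noteq> 0}" using CC_fin[OF HC_CC[OF assms]] .
  have "{j. psi g j \<noteq> 0} \<subseteq> {j. g j \<noteq> 0} \<union> Suc -` {j. g j \<noteq> 0}"
  proof
    fix j assume "j \<in> {j. psi g j \<noteq> 0}"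
    then have "g j \<noteq> 0 \<or> g (Suc j) \<noteq> 0" using psi_bit[of g j] by blast
    then show "j \<in> {j. g j \<noteq> 0} \<union> Suc -` {j. g j \<noteq> 0}" by blast
  qed
  moreover have "finite (Suc -` {j. g j \<noteq> 0})" using f by (rule finite_vimageI) (simp add: inj_def)
  ultimately show "finite {j. psi g j \<noteq> 0}" using f finite_subset by blast
qed

lemma HC_bound: assumes "g \<in> HC" obtains B where "\<And>i. g i \<noteq> 0 \<Longrightarrow> i < B"
proof -
  have "\<exists>m. \<forall>n\<in>{i. g i \<noteq> 0}. n < m"
    using finite_nat_set_iff_bounded[THEN iffD1, OF CC_fin[OF HC_CC[OF assms]]] .
  then obtain B where "\<forall>n\<in>{i. g i \<noteq> 0}. n < B" by (elim exE)
  then show ?thesis using that[of B] by blast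
qed

lemma chi_HC: assumes "g \<in> HC" shows "chi g \<in> HC"
proof (rule HC_I)
  show "chi g j = 0 \<or> chi g j = 2^j" for j by (simp add: chi_def)
  obtain B where B: "\<And>i. g i \<noteq> 0 \<Longrightarrow> i < B" using HC_bound[OF assms] by blast
  have "{j. chi g j \<noteq> 0} \<subseteq> {..<B}"
  proof
    fix j assume "j \<in> {j. chi g j \<noteq> 0}"
    then have "odd (card {i. j \<le> i \<and> g i \<noteq> 0})" by (simp add: chi_def split: if_splits)
    then have "{i. j \<le> i \<and> g i \<noteq> 0} \<noteq> {}" by (metis card.empty even_zero)
    then obtain i where "j \<le> i" "g i \<noteq> 0" by blast
    then show "j \<in> {..<B}" using B by fastforce
  qed
  then show "finite {j. chi g j \<noteq> 0}" using finite_subset by blast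
qed

lemma card_step: assumes "g \<in> HC"
  shows "card {i. j \<le> i \<and> g i \<noteq> 0} = card {i. Suc j \<le> i \<and> g i \<noteq> 0} + (if g j \<noteq> 0 then 1 else 0)"
proof -
  have f: "finite {i. Suc j \<le> i \<and> g i \<noteq> 0}"
    by (rule finite_subset[OF _ CC_fin[OF HC_CC[OF assms]]]) blast
  have nm: "j \<notin> {i. Suc j \<le> i \<and> g i \<noteq> 0}" by simp
  have key: "\<And>i. (j \<le> i) = (i = j \<or> Suc j \<le> i)" by arith
  show ?thesis
  proof (cases "g j \<noteq> 0")
    case True
    have "{i. j \<le> i \<and> g i \<noteq> 0} = insert j {i. Suc j \<le> i \<and> g i \<noteq> 0}"
      using True key by blast
    then show ?thesis using True f nm by simp
  next
    case False
    have "{i. j \<le> i \<and> g i \<noteq> 0} = {i. Suc j \<le> i \<and> g i \<noteq> 0}"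
      unfolding set_eq_iff
    proof
      fix i
      show "(i \<in> {i. j \<le> i \<and> g i \<noteq> 0}) = (i \<in> {i. Suc j \<le> i \<and> g i \<noteq> 0})"
        using False key[of i] by (cases "i = j") auto
    qed
    then show ?thesis using False by simp
  qed
qed

lemma psi_chi: assumes "g \<in> HC" shows "psi (chi g) = g"
proof (rule HC_ext[OF psi_HC[OF chi_HC[OF assms]] assms])
  fix j
  show "(psi (chi g) j \<noteq> 0) = (g j \<noteq> 0)"
    unfolding psi_bit using card_step[OF assms, of j] by (simp add: chi_def)
qed

lemma psi_addc: assumes "g \<in> HC" "h \<in> HC" shows "psi (addc g h) = addc (psi g) (psi h)"
proof (rule HC_ext[OF psi_HC[OF addc_HC[OF assms]] addc_HC[OF psi_HC[OF assms(1)] psi_HC[OF assms(2)]]])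
  fix j
  have a: "(addc g h i \<noteq> 0) = ((g i \<noteq> 0) \<noteq> (h i \<noteq> 0))" for i
    unfolding addc_bit[OF assms] by simp
  have b: "(addc (psi g) (psi h) j \<noteq> 0) = ((psi g j \<noteq> 0) \<noteq> (psi h j \<noteq> 0))"
    unfolding addc_bit[OF psi_HC[OF assms(1)] psi_HC[OF assms(2)]] by simp
  show "(psi (addc g h) j \<noteq> 0) = (addc (psi g) (psi h) j \<noteq> 0)"
    unfolding b psi_bit a by argo
qed

lemma psi_inj: assumes "g \<in> HC" "h \<in> HC" "psi g = psi h" shows "g = h"
proof (rule HC_ext[OF assms(1,2)])
  define c where "c = (\<lambda>j. (g j \<noteq> 0) \<noteq> (h j \<noteq> 0))"
  have step: "c j = c (Suc j)" for j
  proof -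
    have "(psi g j \<noteq> 0) = (psi h j \<noteq> 0)" using assms(3) by simp
    then show ?thesis unfolding psi_bit c_def by blast
  qed
  have ck: "c j = c (j + k)" for j k by (induction k) (use step in auto)
  obtain B1 where B1: "\<And>i. g i \<noteq> 0 \<Longrightarrow> i < B1" using HC_bound[OF assms(1)] by blast
  obtain B2 where B2: "\<And>i. h i \<noteq> 0 \<Longrightarrow> i < B2" using HC_bound[OF assms(2)] by blast
  fix j
  have "\<not> c (j + (B1 + B2))" unfolding c_def using B1 B2 by (metis add.commute less_add_same_cancel2 not_add_less1 trans_less_add1)
  then have "\<not> c j" using ck by metis
  then show "(g j \<noteq> 0) = (h j \<noteq> 0)" unfolding c_def by blast
qed

definition ff :: "real \<Rightarrow> real" where "ff x = enc (psi (dec x))"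

lemma ff_HH: "x \<in> HH \<Longrightarrow> ff x \<in> HH"
  unfolding ff_def using dec_HH psi_HC enc_HH by blast

lemma dec_ff: "x \<in> HH \<Longrightarrow> dec (ff x) = psi (dec x)"
  unfolding ff_def using dec_HH psi_HC HC_CC dec_enc by blast

lemma ff_mult: assumes "x \<in> HH" "y \<in> HH" shows "ff (x \<otimes>\<^bsub>GG\<^esub> y) = ff x \<otimes>\<^bsub>GG\<^esub> ff y"
proof -
  have gx: "dec x \<in> HC" and gy: "dec y \<in> HC" using assms dec_HH by auto
  have "dec (x \<otimes>\<^bsub>GG\<^esub> y) = addc (dec x) (dec y)"
    unfolding GG_mult using addc_CC HC_CC gx gy dec_enc by blast
  then have "ff (x \<otimes>\<^bsub>GG\<^esub> y) = enc (addc (psi (dec x)) (psi (dec y)))"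
    unfolding ff_def using psi_addc[OF gx gy] by simp
  also have "\<dots> = ff x \<otimes>\<^bsub>GG\<^esub> ff y" unfolding GG_mult using dec_ff assms by simp
  finally show ?thesis .
qed

lemma ff_inj: "inj_on ff HH"
proof (rule inj_onI)
  fix x y assume x: "x \<in> HH" and y: "y \<in> HH" and e: "ff x = ff y"
  then have "psi (dec x) = psi (dec y)" using dec_ff by metis
  then have "dec x = dec y" using psi_inj dec_HH x y by blast
  then show "x = y" using x y HH_AA enc_dec by (metis subsetD)
qed

lemma ff_chi: assumes "g \<in> HC" shows "ff (enc (chi g)) = enc g"
  unfolding ff_def using assms chi_HC HC_CC dec_enc psi_chi by metis

lemma ff_surj: "ff ` HH = HH"
proof
  show "ff ` HH \<subseteq> HH" using ff_HH by blast
  show "HH \<subseteq> ff ` HH"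
  proof
    fix y assume y: "y \<in> HH"
    then have "y = ff (enc (chi (dec y)))" using ff_chi dec_HH HH_AA enc_dec by (metis subsetD)
    moreover have "enc (chi (dec y)) \<in> HH" using y dec_HH chi_HC enc_HH by blast
    ultimately show "y \<in> ff ` HH" by blast
  qed
qed

lemma ff_iso: "ff \<in> iso (GG\<lparr>carrier := HH\<rparr>) (GG\<lparr>carrier := HH\<rparr>)"
  unfolding iso_def hom_def upd_simps
  using ff_HH ff_mult ff_inj ff_surj by (auto simp: bij_betw_def)

lemma psi_cong: assumes "g \<in> HC" "h \<in> HC" "\<And>j. g j mod 2^Suc n = h j mod 2^Suc n"
  shows "psi g j mod 2^n = psi h j mod 2^n"
proof (cases "j < n")
  case True
  have "g j = h j" using assms(3)[of j] HC_mod_small[OF assms(1), of j "Suc n"] HC_mod_small[OF assms(2), of j "Suc n"] True by simp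
  moreover have "g (Suc j) = h (Suc j)" using assms(3)[of "Suc j"] HC_mod_small[OF assms(1), of "Suc j" "Suc n"]
      HC_mod_small[OF assms(2), of "Suc j" "Suc n"] True by simp
  ultimately show ?thesis by (simp add: psi_def)
next
  case False
  then show ?thesis using HC_mod_big[OF psi_HC[OF assms(1)], of n j] HC_mod_big[OF psi_HC[OF assms(2)], of n j] by simp
qed

lemma ff_cont: "continuous_map (subtopology TT HH) (subtopology TT HH) ff"
  unfolding continuous_map
proof (intro conjI allI impI)
  have ts: "topspace (subtopology TT HH) = HH" using HH_AA by auto
  show "ff ` topspace (subtopology TT HH) \<subseteq> topspace (subtopology TT HH)" unfolding ts using ff_HH by blast
  fix U assume U: "openin (subtopology TT HH) U"
  then have UH: "U \<subseteq> HH" and Un: "\<forall>x\<in>U. \<exists>n. fib n x \<inter> HH \<subseteq> U" using openin_sub[OF HH_AA] by auto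
  show "openin (subtopology TT HH) {x \<in> topspace (subtopology TT HH). ff x \<in> U}"
    unfolding ts openin_sub[OF HH_AA]
  proof (intro conjI ballI)
    show "{x \<in> HH. ff x \<in> U} \<subseteq> HH" by blast
    fix x assume x: "x \<in> {x \<in> HH. ff x \<in> U}"
    then obtain n where n: "fib n (ff x) \<inter> HH \<subseteq> U" using Un by blast
    have "fib (Suc n) x \<inter> HH \<subseteq> {x \<in> HH. ff x \<in> U}"
    proof
      fix y assume y: "y \<in> fib (Suc n) x \<inter> HH"
      then have yH: "y \<in> HH" and e: "\<And>j. dec y j mod 2^Suc n = dec x j mod 2^Suc n"
        unfolding fib_def phi_def by (auto dest: fun_cong)
      have "phi (ff y) n = phi (ff x) n"
      proof
        fix j show "phi (ff y) n j = phi (ff x) n j"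
          unfolding phi_def using dec_ff yH x psi_cong[OF dec_HH[OF yH] dec_HH, OF _ e] by simp
      qed
      then have "ff y \<in> fib n (ff x) \<inter> HH" using ff_HH[OF yH] HH_AA by (auto simp: fib_def)
      then show "y \<in> {x \<in> HH. ff x \<in> U}" using n yH by blast
    qed
    then show "\<exists>n. fib n x \<inter> HH \<subseteq> {x \<in> HH. ff x \<in> U}" by blast
  qed
qed

lemma ff_not_open: "\<not> open_map (subtopology TT HH) (subtopology TT HH) ff"
proof
  assume op: "open_map (subtopology TT HH) (subtopology TT HH) ff"
  define V where "V = {x \<in> HH. dec x 0 = 0}"
  have V_open: "openin (subtopology TT HH) V"
    unfolding openin_sub[OF HH_AA]
  proof (intro conjI ballI)
    show "V \<subseteq> HH" unfolding V_def by blast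
    fix x assume x: "x \<in> V"
    have "fib 1 x \<inter> HH \<subseteq> V"
    proof
      fix y assume y: "y \<in> fib 1 x \<inter> HH"
      then have "dec y 0 mod 2 = dec x 0 mod 2" unfolding fib_def phi_def by (auto dest: fun_cong[where x = 0])
      then have "dec y 0 mod 2 = 0" using x unfolding V_def by simp
      moreover have "dec y 0 = 0 \<or> dec y 0 = 1" using HC_val[OF dec_HH, of y 0] y by simp
      ultimately show "y \<in> V" using y unfolding V_def by auto
    qed
    then show "\<exists>n. fib n x \<inter> HH \<subseteq> V" by blast
  qed
  then have opV: "openin (subtopology TT HH) (ff ` V)" using op unfolding open_map_def by blast
  have zH: "enc zeroc \<in> HH" using enc_HH[OF zeroc_HC] .
  have z: "enc zeroc \<in> V" unfolding V_def using zH zeroc_CC by (simp add: zeroc_def)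
  have p0: "psi zeroc = zeroc" by (simp add: psi_def zeroc_def)
  have ff0: "ff (enc zeroc) = enc zeroc" unfolding ff_def using zeroc_CC p0 by simp
  have zV: "enc zeroc \<in> ff ` V" using z ff0 by (metis image_eqI)
  have "\<forall>x\<in>ff ` V. \<exists>n. fib n x \<inter> HH \<subseteq> ff ` V"
    using openin_sub[OF HH_AA, THEN iffD1, OF opV] by (rule conjunct2)
  then obtain n where n: "fib n (enc zeroc) \<inter> HH \<subseteq> ff ` V" using zV by blast
  define em where "em = (\<lambda>j. if j = n then (2::int)^n else 0)"
  have emH: "em \<in> HC" by (rule HC_I) (auto simp: em_def)
  have "phi (enc em) n = phi (enc zeroc) n"
  proof
    fix j
    have "em j mod 2^n = 0" by (simp add: em_def)
    then show "phi (enc em) n j = phi (enc zeroc) n j"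
      unfolding phi_def using HC_CC[OF emH] zeroc_CC by (simp add: zeroc_def)
  qed
  then have "enc em \<in> fib n (enc zeroc) \<inter> HH" using emH HC_CC[OF emH] enc_HH[OF emH] by (simp add: fib_def)
  then have emV: "enc em \<in> ff ` V" by (rule subsetD[OF n])
  from emV obtain v where v2: "enc em = ff v" and v1: "v \<in> V" by (rule imageE)
  have v: "v \<in> V" "ff v = enc em" using v1 v2 by simp_all
  have vH: "v \<in> HH" using v(1) unfolding V_def by blast
  have c: "enc (chi em) \<in> HH" using chi_HC[OF emH] enc_HH by blast
  have "ff (enc (chi em)) = enc em" by (rule ff_chi[OF emH])
  then have "ff v = ff (enc (chi em))" using v(2) by simp
  then have "v = enc (chi em)" by (rule inj_onD[OF ff_inj _ vH c])
  then have "dec v 0 = chi em 0" using HC_CC[OF chi_HC[OF emH]] by simp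
  moreover have "{i. 0 \<le> i \<and> em i \<noteq> 0} = {n}" by (auto simp: em_def)
  then have "chi em 0 = 1" by (simp add: chi_def)
  ultimately show False using v(1) unfolding V_def by simp
qed

lemma not_g_rev_HH: "\<not> g_reversible (GG\<lparr>carrier := HH\<rparr>) (subtopology TT HH)"
  unfolding g_reversible_def using ff_iso ff_cont ff_not_open by blast

theorem corollary8p3:
  "\<exists>(G :: real monoid) (T :: real topology) H.
     topological_group G T \<and> separable_space T \<and> metrizable_space T \<and> g_reversible G T \<and>
     subgroup H G \<and> closedin T H \<and> countable H \<and>
     precompact_group (G\<lparr>carrier := H\<rparr>) (subtopology T H) \<and>
     \<not> g_reversible (G\<lparr>carrier := H\<rparr>) (subtopology T H)"
  using topgroup_GG separable_TT metrizable_TT g_rev_GG subgroup_HH closed_HH countable_HH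
    precompact_HH not_g_rev_HH by blast

end
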